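(* There are no rational numbers (in particular, no integers) $x_1,x_2,x_3,d_1,d_2,d_3,L$ such that $\operatorname{rank}N\le 2$, $\operatorname{rank}N_1=2$, $\operatorname{rank}N_2=1$, and $\tilde p_2=\tilde p_3=\dots=\tilde p_8=0$. Likewise there are no such rational numbers with $\operatorname{rank}N\le 2$, $\operatorname{rank}N_1=2$, $\operatorname{rank}N_2=1$ satisfying $p_1=p_2=p_3=0$.
   Context: Define $p_1=x_2^2+x_3^2-d_1^2$, $p_2=x_3^2+x_1^2-d_2^2$, $p_3=x_1^2+x_2^2-d_3^2$, and $\tilde p_2=p_1+p_2+p_3$, $\tilde p_3=d_1p_1+d_2p_2+d_3p_3$, $\tilde p_4=x_1p_1+x_2p_2+x_3p_3$, $\tilde p_5=x_1d_1p_1+x_2d_2p_2+x_3d_3p_3$, $\tilde p_6=x_1^2p_1+x_2^2p_2+x_3^2p_3$, $\tilde p_7=d_1^2p_1+d_2^2p_2+d_3^2p_3$, $\tilde p_8=x_1^2d_1^2p_1+x_2^2d_2^2p_2+x_3^2d_3^2p_3$. $N$ is the $3\times 7$ matrix whose $i$-th row is $(1,\ d_i,\ x_i,\ x_id_i,\ x_i^2,\ d_i^2,\ x_i^2d_i^2)$; $N_1$ is the $3\times 2$ matrix with rows $(1,d_i)$; $N_2$ is the $3\times 2$ matrix with rows $(1,x_i)$, $i=1,2,3$. Ranks are over $\mathbb{Q}$. *)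

theory Defs
  imports "Jordan_Normal_Form.DL_Rank"
begin

text \<open>Rank of a matrix over the field of rationals (column rank, which equals row rank),
  using the Jordan_Normal_Form notion; the argument 3 is the number of rows.\<close>

definition rank3 :: "rat mat \<Rightarrow> nat" where
  "rank3 A = vec_space.rank 3 A"

definition matN :: "rat \<Rightarrow> rat \<Rightarrow> rat \<Rightarrow> rat \<Rightarrow> rat \<Rightarrow> rat \<Rightarrow> rat mat" where
  "matN x1 x2 x3 d1 d2 d3 = mat_of_rows_list 7
     [[1, d1, x1, x1*d1, x1^2, d1^2, x1^2*d1^2],
      [1, d2, x2, x2*d2, x2^2, d2^2, x2^2*d2^2],
      [1, d3, x3, x3*d3, x3^2, d3^2, x3^2*d3^2]]"

definition matN1 :: "rat \<Rightarrow> rat \<Rightarrow> rat \<Rightarrow> rat mat" where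
  "matN1 d1 d2 d3 = mat_of_rows_list 2 [[1, d1], [1, d2], [1, d3]]"

definition matN2 :: "rat \<Rightarrow> rat \<Rightarrow> rat \<Rightarrow> rat mat" where
  "matN2 x1 x2 x3 = mat_of_rows_list 2 [[1, x1], [1, x2], [1, x3]]"

definition p1 :: "rat \<Rightarrow> rat \<Rightarrow> rat \<Rightarrow> rat \<Rightarrow> rat \<Rightarrow> rat \<Rightarrow> rat" where
  "p1 x1 x2 x3 d1 d2 d3 = x2^2 + x3^2 - d1^2"
definition p2 :: "rat \<Rightarrow> rat \<Rightarrow> rat \<Rightarrow> rat \<Rightarrow> rat \<Rightarrow> rat \<Rightarrow> rat" where
  "p2 x1 x2 x3 d1 d2 d3 = x3^2 + x1^2 - d2^2"
definition p3 :: "rat \<Rightarrow> rat \<Rightarrow> rat \<Rightarrow> rat \<Rightarrow> rat \<Rightarrow> rat \<Rightarrow> rat" where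
  "p3 x1 x2 x3 d1 d2 d3 = x1^2 + x2^2 - d3^2"

text \<open>The combinations tilde p_2, ..., tilde p_8: the k-th one is
  \<open>w1 * p1 + w2 * p2 + w3 * p3\<close> with weights \<open>w_i\<close> given by
  1, d_i, x_i, x_i d_i, x_i^2, d_i^2, x_i^2 d_i^2 respectively.\<close>

definition ptilde :: "(rat \<Rightarrow> rat \<Rightarrow> rat) \<Rightarrow> rat \<Rightarrow> rat \<Rightarrow> rat \<Rightarrow> rat \<Rightarrow> rat \<Rightarrow> rat \<Rightarrow> rat" where
  "ptilde w x1 x2 x3 d1 d2 d3 =
     w x1 d1 * p1 x1 x2 x3 d1 d2 d3 + w x2 d2 * p2 x1 x2 x3 d1 d2 d3 + w x3 d3 * p3 x1 x2 x3 d1 d2 d3"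

definition weights :: "(rat \<Rightarrow> rat \<Rightarrow> rat) list" where
  "weights = [(\<lambda>x d. 1), (\<lambda>x d. d), (\<lambda>x d. x), (\<lambda>x d. x * d),
              (\<lambda>x d. x^2), (\<lambda>x d. d^2), (\<lambda>x d. x^2 * d^2)]"

end

theory Submission
  imports Defs
begin

lemma N2_dims: "dim_row (matN2 x1 x2 x3) = 3" "dim_col (matN2 x1 x2 x3) = 2"
  by (simp_all add: matN2_def mat_of_rows_list_def numeral_3_eq_3)

lemma N2_car: "matN2 x1 x2 x3 \<in> carrier_mat 3 2"
  using N2_dims by (rule carrier_matI)

lemma N2_idx: assumes "i < 3" "j < 2"
  shows "matN2 x1 x2 x3 $$ (i,j) = (if j = 0 then 1 else [x1,x2,x3] ! i)"
proof -
  have "i = 0 \<or> i = 1 \<or> i = 2" using assms by linarith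
  moreover have "j = 0 \<or> j = 1" using assms by linarith
  ultimately show ?thesis unfolding matN2_def mat_of_rows_list_def
    by (auto simp: numeral_3_eq_3)
qed

lemma N1_dims: "dim_row (matN1 d1 d2 d3) = 3" "dim_col (matN1 d1 d2 d3) = 2"
  by (simp_all add: matN1_def mat_of_rows_list_def numeral_3_eq_3)

lemma N1_car: "matN1 d1 d2 d3 \<in> carrier_mat 3 2"
  using N1_dims by (rule carrier_matI)

lemma N1_idx: assumes "i < 3" "j < 2"
  shows "matN1 d1 d2 d3 $$ (i,j) = (if j = 0 then 1 else [d1,d2,d3] ! i)"
proof -
  have "i = 0 \<or> i = 1 \<or> i = 2" using assms by linarith
  moreover have "j = 0 \<or> j = 1" using assms by linarith
  ultimately show ?thesis unfolding matN1_def mat_of_rows_list_def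
    by (auto simp: numeral_3_eq_3)
qed

lemma N2_mult: assumes "v \<in> carrier_vec 2" "i < 3"
  shows "(matN2 x1 x2 x3 *\<^sub>v v) $ i = v $ 0 + [x1,x2,x3] ! i * v $ 1"
proof -
  have dv: "dim_vec v = 2" using assms(1) by simp
  have "(matN2 x1 x2 x3 *\<^sub>v v) $ i = row (matN2 x1 x2 x3) i \<bullet> v"
    using assms(2) N2_dims by simp
  also have "\<dots> = (\<Sum>j\<in>{0..<2}. row (matN2 x1 x2 x3) i $ j * v $ j)"
    unfolding scalar_prod_def dv ..
  also have "\<dots> = row (matN2 x1 x2 x3) i $ 0 * v $ 0 + row (matN2 x1 x2 x3) i $ 1 * v $ 1"
    by (simp add: numeral_2_eq_2)
  also have "\<dots> = v $ 0 + [x1,x2,x3] ! i * v $ 1"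
    using assms(2) N2_dims N2_idx[of i 0] N2_idx[of i 1] by simp
  finally show ?thesis .
qed

lemma N1_low:
  assumes "d1 = d2" "d2 = d3"
  shows "rank3 (matN1 d1 d2 d3) \<le> 1"
  unfolding rank3_def
proof (rule vec_space.rank_le_1_product_entries[where nc=2 and f="\<lambda>r. 1" and g="\<lambda>c. if c = 0 then 1 else d1"])
  show "matN1 d1 d2 d3 \<in> carrier_mat 3 2" by (rule N1_car)
  fix r c assume rc: "r < dim_row (matN1 d1 d2 d3)" "c < dim_col (matN1 d1 d2 d3)"
  then have r: "r < 3" and c: "c < 2" using N1_dims by auto
  have "[d1,d2,d3] ! r = d1"
  proof -
    have "r = 0 \<or> r = 1 \<or> r = 2" using r by linarith
    then show ?thesis using assms by auto
  qed
  then show "matN1 d1 d2 d3 $$ (r, c) = 1 * (if c = 0 then 1 else d1)"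
    using N1_idx[OF r c] by simp
qed

lemma N2_full:
  assumes "\<not> (x1 = x2 \<and> x2 = x3)"
  shows "rank3 (matN2 x1 x2 x3) = 2"
proof -
  let ?A = "matN2 x1 x2 x3"
  have car: "?A \<in> carrier_mat 3 2" by (rule N2_car)
  have len: "length (cols ?A) = 2" using N2_dims by simp
  have c01: "col ?A 0 \<noteq> col ?A 1"
  proof
    assume eq: "col ?A 0 = col ?A 1"
    have "\<forall>i<3. [x1,x2,x3] ! i = 1"
    proof (intro allI impI)
      fix i :: nat assume i: "i < 3"
      have "col ?A 0 $ i = col ?A 1 $ i" using eq by simp
      then show "[x1,x2,x3] ! i = 1" using i N2_dims N2_idx[OF i, of 0] N2_idx[OF i, of 1] by simp
    qed
    then have "x1 = 1" "x2 = 1" "x3 = 1"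
      by (auto dest: spec[of _ 0] spec[of _ 1] spec[of _ 2])
    then show False using assms by simp
  qed
  have dist: "distinct (cols ?A)"
  proof -
    have "cols ?A = [col ?A 0, col ?A 1]"
      using N2_dims by (simp add: cols_def numeral_2_eq_2 upt_conv_Cons)
    then show ?thesis using c01 by simp
  qed
  show ?thesis unfolding rank3_def
    apply (rule vec_space.lin_indpt_full_rank[OF car dist])
    apply (rule notI)
    apply (erule vec_space.lin_depE[OF car _ dist])
    subgoal for v
    proof -
    assume v: "v \<in> carrier_vec 2" "v \<noteq> 0\<^sub>v 2" "?A *\<^sub>v v = 0\<^sub>v 3"
    have z: "\<And>i. i < 3 \<Longrightarrow> v $ 0 + [x1,x2,x3] ! i * v $ 1 = 0"
    proof -
      fix i :: nat assume i: "i < 3"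
      have "(?A *\<^sub>v v) $ i = 0" using v(3) i by simp
      then show "v $ 0 + [x1,x2,x3] ! i * v $ 1 = 0" using N2_mult[OF v(1) i] by simp
    qed
    have e: "v $ 0 + x1 * v $ 1 = 0" "v $ 0 + x2 * v $ 1 = 0" "v $ 0 + x3 * v $ 1 = 0"
      using z[of 0] z[of 1] z[of 2] by simp_all
    have v1: "v $ 1 = 0"
    proof (rule ccontr)
      assume nz: "v $ 1 \<noteq> 0"
      have "x1 * v $ 1 = x2 * v $ 1" "x2 * v $ 1 = x3 * v $ 1" using e by linarith+
      then have "x1 = x2" "x2 = x3" using nz by simp_all
      then show False using assms by simp
    qed
    then have v0: "v $ 0 = 0" using e by simp
    have "v = 0\<^sub>v 2"
    proof (rule eq_vecI)
      show "dim_vec v = dim_vec (0\<^sub>v 2 :: rat vec)" using v(1) by simp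
      fix i assume "i < dim_vec (0\<^sub>v 2 :: rat vec)"
      then have "i = 0 \<or> i = 1" by simp linarith
      then show "v $ i = 0\<^sub>v 2 $ i" using v0 v1 by auto
    qed
    then show False using v(2) by simp
    qed
    done
qed

lemma rat_sq2: fixes d x :: rat assumes "d^2 = 2 * x^2" shows "x = 0"
proof (rule ccontr)
  assume x: "x \<noteq> 0"
  define q where "q = d / x"
  have q2: "q^2 = 2" using assms x by (simp add: q_def power_divide)
  obtain a b where ab: "quotient_of q = (a, b)" by (cases "quotient_of q")
  have b: "b > 0" and cp: "coprime a b" and qa: "q = of_int a / of_int b"
    using quotient_of_denom_pos[OF ab] quotient_of_coprime[OF ab] quotient_of_div[OF ab] by auto
  have "(of_int a / of_int b :: rat)^2 = 2" using q2 qa by simp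
  then have "(of_int (a^2) :: rat) = of_int (2 * b^2)" using b by (simp add: power_divide field_simps)
  then have e: "a^2 = 2 * b^2" by (simp only: of_int_eq_iff)
  then have "even (a^2)" by simp
  then have "even a" by simp
  then obtain k where k: "a = 2 * k" by blast
  then have "b^2 = 2 * k^2" using e by (simp add: power_mult_distrib)
  then have "even (b^2)" by simp
  then have "even b" by simp
  then show False using cp \<open>even a\<close> coprime_common_divisor[of a b 2] by auto
qed

lemma key:
  fixes x d1 d2 d3 :: rat
  defines "a \<equiv> 2*x^2 - d1^2" and "b \<equiv> 2*x^2 - d2^2" and "c \<equiv> 2*x^2 - d3^2"
  assumes e1: "a + b + c = 0" and e2: "d1*a + d2*b + d3*c = 0" and e3: "d1^2*a + d2^2*b + d3^2*c = 0"
    and nd: "\<not> (d1 = d2 \<and> d2 = d3)"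
  shows False
proof -
  have pa: "a * (d1 - d2) * (d1 - d3) = 0"
  proof -
    have "a * (d1 - d2) * (d1 - d3) = (d1^2*a + d2^2*b + d3^2*c) - (d2+d3)*(d1*a + d2*b + d3*c) + d2*d3*(a+b+c)"
      by (simp add: algebra_simps power2_eq_square)
    then show ?thesis using e1 e2 e3 by simp
  qed
  have pb: "b * (d2 - d1) * (d2 - d3) = 0"
  proof -
    have "b * (d2 - d1) * (d2 - d3) = (d1^2*a + d2^2*b + d3^2*c) - (d1+d3)*(d1*a + d2*b + d3*c) + d1*d3*(a+b+c)"
      by (simp add: algebra_simps power2_eq_square)
    then show ?thesis using e1 e2 e3 by simp
  qed
  have pc: "c * (d3 - d1) * (d3 - d2) = 0"
  proof -
    have "c * (d3 - d1) * (d3 - d2) = (d1^2*a + d2^2*b + d3^2*c) - (d1+d2)*(d1*a + d2*b + d3*c) + d1*d2*(a+b+c)"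
      by (simp add: algebra_simps power2_eq_square)
    then show ?thesis using e1 e2 e3 by simp
  qed
  have "a = 0 \<and> b = 0 \<and> c = 0"
  proof (cases "d1 = d2")
    case True
    then have "d1 \<noteq> d3" using nd by auto
    then have "c = 0" using pc True by simp
    moreover have "a = b" unfolding a_def b_def using True by simp
    ultimately have "c = 0" "a = b" by simp_all
    then show ?thesis using e1 by auto
  next
    case f: False
    show ?thesis
    proof (cases "d1 = d3")
      case True
      then have "d2 \<noteq> d3" using f by auto
      then have "b = 0" using pb True f by simp
      moreover have "a = c" unfolding a_def c_def using True by simp
      ultimately have "b = 0" "a = c" by simp_all
      then show ?thesis using e1 by auto
    next
      case g: False
      show ?thesis
      proof (cases "d2 = d3")
        case True
        have "a = 0" using pa f g by simp
        moreover have "b = c" unfolding b_def c_def using True by simp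
        ultimately have "a = 0" "b = c" by simp_all
        then show ?thesis using e1 by auto
      next
        case False
        then have "a = 0" "b = 0" "c = 0" using pa pb pc f g by simp_all
        then show ?thesis by simp
      qed
    qed
  qed
  then have "d1^2 = 2*x^2" "d2^2 = 2*x^2" "d3^2 = 2*x^2" unfolding a_def b_def c_def by simp_all
  then have "x = 0" using rat_sq2 by blast
  then have "d1 = 0" "d2 = 0" "d3 = 0" using \<open>d1^2 = 2*x^2\<close> \<open>d2^2 = 2*x^2\<close> \<open>d3^2 = 2*x^2\<close> by auto
  then show False using nd by simp
qed

theorem theorem4p1:
  fixes x1 x2 x3 d1 d2 d3 L :: rat
  assumes "rank3 (matN x1 x2 x3 d1 d2 d3) \<le> 2"
    and "rank3 (matN1 d1 d2 d3) = 2"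
    and "rank3 (matN2 x1 x2 x3) = 1"
  shows "\<not> (\<forall>w \<in> set weights. ptilde w x1 x2 x3 d1 d2 d3 = 0) \<and>
         \<not> (p1 x1 x2 x3 d1 d2 d3 = 0 \<and> p2 x1 x2 x3 d1 d2 d3 = 0 \<and> p3 x1 x2 x3 d1 d2 d3 = 0)"
proof -
  have xe: "x1 = x2 \<and> x2 = x3"
  proof (rule ccontr)
    assume "\<not> (x1 = x2 \<and> x2 = x3)"
    then have "rank3 (matN2 x1 x2 x3) = 2" by (rule N2_full)
    with assms(3) show False by simp
  qed
  have nd: "\<not> (d1 = d2 \<and> d2 = d3)"
  proof
    assume "d1 = d2 \<and> d2 = d3"
    then have "rank3 (matN1 d1 d2 d3) \<le> 1" using N1_low by blast
    with assms(2) show False by simp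
  qed
  have P: "p1 x1 x2 x3 d1 d2 d3 = 2*x1^2 - d1^2" "p2 x1 x2 x3 d1 d2 d3 = 2*x1^2 - d2^2"
     "p3 x1 x2 x3 d1 d2 d3 = 2*x1^2 - d3^2" using xe by (auto simp: p1_def p2_def p3_def)
  have A: "\<not> (\<forall>w \<in> set weights. ptilde w x1 x2 x3 d1 d2 d3 = 0)"
  proof
    assume h: "\<forall>w \<in> set weights. ptilde w x1 x2 x3 d1 d2 d3 = 0"
    then have "ptilde (\<lambda>x d. 1) x1 x2 x3 d1 d2 d3 = 0" "ptilde (\<lambda>x d. d) x1 x2 x3 d1 d2 d3 = 0"
      "ptilde (\<lambda>x d. d^2) x1 x2 x3 d1 d2 d3 = 0" by (auto simp: weights_def)
    then have h1: "(2*x1^2 - d1^2) + (2*x1^2 - d2^2) + (2*x1^2 - d3^2) = 0"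
      and h2: "d1*(2*x1^2 - d1^2) + d2*(2*x1^2 - d2^2) + d3*(2*x1^2 - d3^2) = 0"
      and h3: "d1^2*(2*x1^2 - d1^2) + d2^2*(2*x1^2 - d2^2) + d3^2*(2*x1^2 - d3^2) = 0"
      unfolding ptilde_def P by (simp_all only: mult_1)
    show False by (rule key[OF h1 h2 h3 nd])
  qed
  have B: "\<not> (p1 x1 x2 x3 d1 d2 d3 = 0 \<and> p2 x1 x2 x3 d1 d2 d3 = 0 \<and> p3 x1 x2 x3 d1 d2 d3 = 0)"
  proof
    assume "p1 x1 x2 x3 d1 d2 d3 = 0 \<and> p2 x1 x2 x3 d1 d2 d3 = 0 \<and> p3 x1 x2 x3 d1 d2 d3 = 0"
    then have z: "2*x1^2 - d1^2 = 0" "2*x1^2 - d2^2 = 0" "2*x1^2 - d3^2 = 0" unfolding P by auto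
    show False by (rule key[OF _ _ _ nd, of x1]) (simp_all only: z mult_zero_right add_0)
  qed
  show ?thesis using A B by blast
qed

end
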